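(* Let $N\ge1$, $h,\varepsilon\in(0,1)$, and let $\Phi$ be the opinion operator defined in the context. Let $0\le L\le N$ and let $P=(p_1,\dots,p_N)$ with $p_k=-1$ for $k\le L$ and $p_k=1$ for $k>L$ (a basic fixed point). Let $V^0\in[-1,1]^N$ have nondecreasing components and satisfy $\rho(V^0,P)\le 1-\varepsilon$, where $\rho(V,V')=\max_{1\le k\le N}|v_k-v_k'|$. Then there exists $n_0$ such that $\Phi^n(V^0)=P$ for all $n\ge n_0$.
   Context: For $V=(v_1,\dots,v_N)\in[-1,1]^N$ and each $k$, let $J(v_k)=\{l\in\{1,\dots,N\}:|v_l-v_k|\le\varepsilon\}$ and $I(v_k)=|J(v_k)|$. Put $w_k(V)=v_k+\frac{h}{I(v_k)}\sum_{l\in J(v_k)}v_l$. Then $\Phi(V)=(v_1',\dots,v_N')$ where $v_k'=-1$ if $w_k<-1$, $v_k'=1$ if $w_k>1$, and $v_k'=w_k$ if $|w_k|\le1$. *)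

theory Defs
  imports "HOL-Analysis.Analysis"
begin

text \<open>Opinion vectors V = (v_1,...,v_N) are represented as functions nat => real;
  only the indices 1..N are meaningful.\<close>

definition Jset :: "nat \<Rightarrow> real \<Rightarrow> (nat \<Rightarrow> real) \<Rightarrow> nat \<Rightarrow> nat set" where
  "Jset N \<epsilon> V k = {l \<in> {1..N}. \<bar>V l - V k\<bar> \<le> \<epsilon>}"

definition Icard :: "nat \<Rightarrow> real \<Rightarrow> (nat \<Rightarrow> real) \<Rightarrow> nat \<Rightarrow> nat" where
  "Icard N \<epsilon> V k = card (Jset N \<epsilon> V k)"

definition wval :: "nat \<Rightarrow> real \<Rightarrow> real \<Rightarrow> (nat \<Rightarrow> real) \<Rightarrow> nat \<Rightarrow> real" where
  "wval N h \<epsilon> V k = V k + h / real (Icard N \<epsilon> V k) * (\<Sum>l\<in>Jset N \<epsilon> V k. V l)"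

definition Phi :: "nat \<Rightarrow> real \<Rightarrow> real \<Rightarrow> (nat \<Rightarrow> real) \<Rightarrow> (nat \<Rightarrow> real)" where
  "Phi N h \<epsilon> V = (\<lambda>k. if k \<in> {1..N} then
      (if wval N h \<epsilon> V k < -1 then -1
       else if wval N h \<epsilon> V k > 1 then 1
       else wval N h \<epsilon> V k)
    else 0)"

definition rho :: "nat \<Rightarrow> (nat \<Rightarrow> real) \<Rightarrow> (nat \<Rightarrow> real) \<Rightarrow> real" where
  "rho N V V' = Max ((\<lambda>k. \<bar>V k - V' k\<bar>) ` {1..N})"

end

theory Submission
  imports Defs
begin

definition Inv :: "nat \<Rightarrow> nat \<Rightarrow> real \<Rightarrow> (nat \<Rightarrow> real) \<Rightarrow> bool" where
  "Inv N L \<epsilon> V \<longleftrightarrow> (\<forall>k\<in>{1..N}. V k \<in> {-1..1} \<and> (k \<le> L \<longrightarrow> V k \<le> -\<epsilon>) \<and> (L < k \<longrightarrow> \<epsilon> \<le> V k))"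

lemma wval_neg:
  assumes inv: "Inv N L \<epsilon> V" and h: "0 < h" and e: "0 < \<epsilon>" and k: "k \<in> {1..N}" "k \<le> L"
  shows "wval N h \<epsilon> V k \<le> V k - h * \<epsilon>"
proof -
  let ?J = "Jset N \<epsilon> V k"
  have fin: "finite ?J" unfolding Jset_def by auto
  have kJ: "k \<in> ?J" using k e unfolding Jset_def by auto
  hence cpos: "card ?J > 0" using fin card_gt_0_iff by blast
  have Jneg: "\<forall>l\<in>?J. V l \<le> -\<epsilon>"
  proof
    fix l assume l: "l \<in> ?J"
    hence l1: "l \<in> {1..N}" and d: "\<bar>V l - V k\<bar> \<le> \<epsilon>" unfolding Jset_def by auto
    have vk: "V k \<le> -\<epsilon>" using inv k unfolding Inv_def by auto
    show "V l \<le> -\<epsilon>"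
    proof (cases "l \<le> L")
      case True then show ?thesis using inv l1 unfolding Inv_def by auto
    next
      case False
      hence "\<epsilon> \<le> V l" using inv l1 unfolding Inv_def by auto
      then show ?thesis using d vk e by auto
    qed
  qed
  have "(\<Sum>l\<in>?J. V l) \<le> (\<Sum>l\<in>?J. -\<epsilon>)" using Jneg by (intro sum_mono) auto
  also have "\<dots> = - \<epsilon> * real (card ?J)" by simp
  finally have S: "(\<Sum>l\<in>?J. V l) \<le> - \<epsilon> * real (card ?J)" .
  have "h / real (card ?J) * (\<Sum>l\<in>?J. V l) \<le> h / real (card ?J) * (- \<epsilon> * real (card ?J))"
    using S h by (intro mult_left_mono) auto
  also have "\<dots> = - h * \<epsilon>" using cpos by (simp add: field_simps)
  finally show ?thesis unfolding wval_def Icard_def by simp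
qed

lemma wval_pos:
  assumes inv: "Inv N L \<epsilon> V" and h: "0 < h" and e: "0 < \<epsilon>" and k: "k \<in> {1..N}" "L < k"
  shows "wval N h \<epsilon> V k \<ge> V k + h * \<epsilon>"
proof -
  let ?J = "Jset N \<epsilon> V k"
  have fin: "finite ?J" unfolding Jset_def by auto
  have kJ: "k \<in> ?J" using k e unfolding Jset_def by auto
  hence cpos: "card ?J > 0" using fin card_gt_0_iff by blast
  have Jpos: "\<forall>l\<in>?J. \<epsilon> \<le> V l"
  proof
    fix l assume l: "l \<in> ?J"
    hence l1: "l \<in> {1..N}" and d: "\<bar>V l - V k\<bar> \<le> \<epsilon>" unfolding Jset_def by auto
    have vk: "\<epsilon> \<le> V k" using inv k unfolding Inv_def by auto
    show "\<epsilon> \<le> V l"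
    proof (cases "l \<le> L")
      case False then show ?thesis using inv l1 unfolding Inv_def by auto
    next
      case True
      hence "V l \<le> -\<epsilon>" using inv l1 unfolding Inv_def by auto
      then show ?thesis using d vk e by auto
    qed
  qed
  have "(\<Sum>l\<in>?J. \<epsilon>) \<le> (\<Sum>l\<in>?J. V l)" using Jpos by (intro sum_mono) auto
  then have S: "\<epsilon> * real (card ?J) \<le> (\<Sum>l\<in>?J. V l)" by (simp add: mult.commute)
  have "h / real (card ?J) * (\<epsilon> * real (card ?J)) \<le> h / real (card ?J) * (\<Sum>l\<in>?J. V l)"
    using S h by (intro mult_left_mono) auto
  moreover have "h / real (card ?J) * (\<epsilon> * real (card ?J)) = h * \<epsilon>" using cpos by (simp add: field_simps)
  ultimately show ?thesis unfolding wval_def Icard_def by simp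
qed

lemma step:
  assumes inv: "Inv N L \<epsilon> V" and h: "0 < h" and e: "0 < \<epsilon>"
  shows "Inv N L \<epsilon> (Phi N h \<epsilon> V)"
    and "\<And>k. k \<in> {1..N} \<Longrightarrow> k \<le> L \<Longrightarrow> Phi N h \<epsilon> V k \<le> max (-1) (V k - h * \<epsilon>)"
    and "\<And>k. k \<in> {1..N} \<Longrightarrow> L < k \<Longrightarrow> Phi N h \<epsilon> V k \<ge> min 1 (V k + h * \<epsilon>)"
proof -
  have A: "Phi N h \<epsilon> V k \<le> max (-1) (V k - h * \<epsilon>) \<and> Phi N h \<epsilon> V k \<le> -\<epsilon> \<and> Phi N h \<epsilon> V k \<ge> -1"
    if k: "k \<in> {1..N}" "k \<le> L" for k
  proof -
    have w: "wval N h \<epsilon> V k \<le> V k - h * \<epsilon>" using wval_neg[OF inv h e k] .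
    have "V k \<le> -\<epsilon>" "-1 \<le> V k" using inv k unfolding Inv_def by auto
    moreover have "0 < h * \<epsilon>" using h e by simp
    ultimately show ?thesis using w k unfolding Phi_def by auto
  qed
  have B: "Phi N h \<epsilon> V k \<ge> min 1 (V k + h * \<epsilon>) \<and> Phi N h \<epsilon> V k \<ge> \<epsilon> \<and> Phi N h \<epsilon> V k \<le> 1"
    if k: "k \<in> {1..N}" "L < k" for k
  proof -
    have w: "wval N h \<epsilon> V k \<ge> V k + h * \<epsilon>" using wval_pos[OF inv h e k] .
    have "\<epsilon> \<le> V k" "V k \<le> 1" using inv k unfolding Inv_def by auto
    moreover have "0 < h * \<epsilon>" using h e by simp
    ultimately show ?thesis using w k unfolding Phi_def by auto
  qed
  show "Inv N L \<epsilon> (Phi N h \<epsilon> V)" unfolding Inv_def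
  proof
    fix k assume k: "k \<in> {1..N}"
    show "Phi N h \<epsilon> V k \<in> {-1..1} \<and> (k \<le> L \<longrightarrow> Phi N h \<epsilon> V k \<le> -\<epsilon>) \<and> (L < k \<longrightarrow> \<epsilon> \<le> Phi N h \<epsilon> V k)"
    proof (cases "k \<le> L")
      case True then show ?thesis using A[OF k True] e by auto
    next
      case False then show ?thesis using B[OF k] e by auto
    qed
  qed
  show "\<And>k. k \<in> {1..N} \<Longrightarrow> k \<le> L \<Longrightarrow> Phi N h \<epsilon> V k \<le> max (-1) (V k - h * \<epsilon>)" using A by blast
  show "\<And>k. k \<in> {1..N} \<Longrightarrow> L < k \<Longrightarrow> Phi N h \<epsilon> V k \<ge> min 1 (V k + h * \<epsilon>)" using B by blast
qed

lemma iter: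
  assumes inv: "Inv N L \<epsilon> V" and h: "0 < h" and e: "0 < \<epsilon>"
  shows "Inv N L \<epsilon> ((Phi N h \<epsilon> ^^ n) V)
    \<and> (\<forall>k\<in>{1..N}. k \<le> L \<longrightarrow> (Phi N h \<epsilon> ^^ n) V k \<le> max (-1) (-\<epsilon> - real n * h * \<epsilon>))
    \<and> (\<forall>k\<in>{1..N}. L < k \<longrightarrow> (Phi N h \<epsilon> ^^ n) V k \<ge> min 1 (\<epsilon> + real n * h * \<epsilon>))"
proof (induction n)
  case 0 then show ?case using inv unfolding Inv_def by auto
next
  case (Suc n)
  let ?W = "(Phi N h \<epsilon> ^^ n) V"
  have iw: "Inv N L \<epsilon> ?W" using Suc by blast
  have 1: "Inv N L \<epsilon> (Phi N h \<epsilon> ?W)" using step(1)[OF iw h e] .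
  have 2: "Phi N h \<epsilon> ?W k \<le> max (-1) (-\<epsilon> - real (Suc n) * h * \<epsilon>)" if k: "k \<in> {1..N}" "k \<le> L" for k
  proof -
    have a: "Phi N h \<epsilon> ?W k \<le> max (-1) (?W k - h * \<epsilon>)" using step(2)[OF iw h e k] .
    have b: "?W k \<le> max (-1) (-\<epsilon> - real n * h * \<epsilon>)" using Suc k by blast
    have "-1 - h * \<epsilon> \<le> -1" using h e by (simp add: mult_pos_pos less_imp_le)
    then show ?thesis using a b by (auto simp: algebra_simps max_def split: if_splits)
  qed
  have 3: "Phi N h \<epsilon> ?W k \<ge> min 1 (\<epsilon> + real (Suc n) * h * \<epsilon>)" if k: "k \<in> {1..N}" "L < k" for k
  proof -
    have a: "Phi N h \<epsilon> ?W k \<ge> min 1 (?W k + h * \<epsilon>)" using step(3)[OF iw h e k] .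
    have b: "?W k \<ge> min 1 (\<epsilon> + real n * h * \<epsilon>)" using Suc k by blast
    have "1 + h * \<epsilon> \<ge> 1" using h e by (simp add: mult_pos_pos less_imp_le)
    then show ?thesis using a b by (auto simp: algebra_simps min_def split: if_splits)
  qed
  show ?case using 1 2 3 by simp
qed

theorem theorem1:
  fixes N L :: nat and h \<epsilon> :: real and V0 P :: "nat \<Rightarrow> real"
  assumes "N \<ge> 1"
    and "0 < h" "h < 1" "0 < \<epsilon>" "\<epsilon> < 1"
    and "L \<le> N"
    and "\<And>k. k \<in> {1..N} \<Longrightarrow> P k = (if k \<le> L then -1 else 1)"
    and "\<And>k. k \<in> {1..N} \<Longrightarrow> V0 k \<in> {-1..1}"
    and "\<And>k l. k \<in> {1..N} \<Longrightarrow> l \<in> {1..N} \<Longrightarrow> k \<le> l \<Longrightarrow> V0 k \<le> V0 l"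
    and "rho N V0 P \<le> 1 - \<epsilon>"
  shows "\<exists>n0. \<forall>n\<ge>n0. \<forall>k\<in>{1..N}. ((Phi N h \<epsilon>) ^^ n) V0 k = P k"
proof -
  have d: "\<bar>V0 k - P k\<bar> \<le> 1 - \<epsilon>" if k: "k \<in> {1..N}" for k
  proof -
    have "\<bar>V0 k - P k\<bar> \<le> rho N V0 P" unfolding rho_def using k by (intro Max_ge) auto
    then show ?thesis using assms(10) by linarith
  qed
  have inv: "Inv N L \<epsilon> V0" unfolding Inv_def
  proof
    fix k assume k: "k \<in> {1..N}"
    show "V0 k \<in> {-1..1} \<and> (k \<le> L \<longrightarrow> V0 k \<le> -\<epsilon>) \<and> (L < k \<longrightarrow> \<epsilon> \<le> V0 k)"
      using assms(7)[OF k] assms(8)[OF k] d[OF k] by (auto split: if_splits)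
  qed
  have he: "0 < h * \<epsilon>" using assms by simp
  obtain n0 :: nat where n0: "1 / (h * \<epsilon>) < real n0" using reals_Archimedean2 by blast
  have big: "1 \<le> real n * (h * \<epsilon>)" if "n \<ge> n0" for n
  proof -
    have "1 / (h * \<epsilon>) \<le> real n" using n0 that by (meson less_imp_le of_nat_le_iff order_trans)
    then show ?thesis using he by (simp add: divide_le_eq mult.commute)
  qed
  show ?thesis
  proof (intro exI allI impI ballI)
    fix n k assume n: "n0 \<le> n" and k: "k \<in> {1..N}"
    have It: "Inv N L \<epsilon> ((Phi N h \<epsilon> ^^ n) V0)
      \<and> (\<forall>k\<in>{1..N}. k \<le> L \<longrightarrow> (Phi N h \<epsilon> ^^ n) V0 k \<le> max (-1) (-\<epsilon> - real n * h * \<epsilon>))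
      \<and> (\<forall>k\<in>{1..N}. L < k \<longrightarrow> (Phi N h \<epsilon> ^^ n) V0 k \<ge> min 1 (\<epsilon> + real n * h * \<epsilon>))"
      using iter[OF inv assms(2) assms(4)] .
    have b: "1 \<le> real n * h * \<epsilon>" using big[OF n] by (simp add: mult.assoc)
    have r: "(Phi N h \<epsilon> ^^ n) V0 k \<in> {-1..1}" using It k unfolding Inv_def by blast
    show "(Phi N h \<epsilon> ^^ n) V0 k = P k"
    proof (cases "k \<le> L")
      case True
      then have "(Phi N h \<epsilon> ^^ n) V0 k \<le> max (-1) (-\<epsilon> - real n * h * \<epsilon>)" using It k by blast
      then show ?thesis using r b assms(4) assms(7)[OF k] True by auto
    next
      case False
      then have "(Phi N h \<epsilon> ^^ n) V0 k \<ge> min 1 (\<epsilon> + real n * h * \<epsilon>)" using It k by auto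
      then show ?thesis using r b assms(4) assms(7)[OF k] False by auto
    qed
  qed
qed

end
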